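(* Let $M$ be a model of a complete affine theory which has an elementary substructure $K\preccurlyeq M$ whose underlying metric space is compact. Let $D_1\subseteq D_2\subseteq\cdots$ be definable subsets of $M^n$. Then $D=\overline{\bigcup_nD_n}$ is definable.
   Context: Affine continuous logic: $L$-structures are complete metric spaces $(M,d)$ with $d\le1$ and Lipschitz interpretations of function symbols and $[0,1]$-valued relation symbols. Affine formulas are built from $1$ and atomic formulas (including $d$) using only $r\cdot\phi$ ($r\in\mathbb R$), $\phi+\psi$, $\inf_x$, $\sup_x$; $K\preccurlyeq M$ means every affine formula with parameters from $K$ has the same value in $K$ and $M$. A predicate $P:M^n\to\mathbb R$ is definable (without parameters) if it is a uniform limit on $M^n$ of $\phi_k^M$ for affine formulas $\phi_k$. A closed $D\subseteq M^n$ is definable if $\bar x\mapsto d(\bar x,D)=\inf_{\bar a\in D}d(\bar x,\bar a)$ is definable. $\overline{X}$ denotes topological closure. *)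

theory Defs
  imports "HOL-Analysis.Analysis"
begin

text \<open>A language is given by a type of function symbols 'f with an arity map
  and a type of relation symbols 'r with an arity map.  Variables are natural numbers.\<close>

datatype 'f trm = Var nat | Fn 'f "'f trm list"

datatype ('f, 'r) afm =
    One
  | Rel 'r "'f trm list"
  | Dst "'f trm" "'f trm"
  | Scale real "('f, 'r) afm"
  | Add "('f, 'r) afm" "('f, 'r) afm"
  | Inf_q nat "('f, 'r) afm"
  | Sup_q nat "('f, 'r) afm"

fun wf_trm :: "('f \<Rightarrow> nat) \<Rightarrow> 'f trm \<Rightarrow> bool" where
  "wf_trm arf (Var i) = True"
| "wf_trm arf (Fn f ts) = (length ts = arf f \<and> (\<forall>t\<in>set ts. wf_trm arf t))"

fun wf_fm :: "('f \<Rightarrow> nat) \<Rightarrow> ('r \<Rightarrow> nat) \<Rightarrow> ('f, 'r) afm \<Rightarrow> bool" where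
  "wf_fm arf arr One = True"
| "wf_fm arf arr (Rel r ts) = (length ts = arr r \<and> (\<forall>t\<in>set ts. wf_trm arf t))"
| "wf_fm arf arr (Dst s t) = (wf_trm arf s \<and> wf_trm arf t)"
| "wf_fm arf arr (Scale c \<phi>) = wf_fm arf arr \<phi>"
| "wf_fm arf arr (Add \<phi> \<psi>) = (wf_fm arf arr \<phi> \<and> wf_fm arf arr \<psi>)"
| "wf_fm arf arr (Inf_q x \<phi>) = wf_fm arf arr \<phi>"
| "wf_fm arf arr (Sup_q x \<phi>) = wf_fm arf arr \<phi>"

fun fv_trm :: "'f trm \<Rightarrow> nat set" where
  "fv_trm (Var i) = {i}"
| "fv_trm (Fn f ts) = (\<Union>t\<in>set ts. fv_trm t)"

fun fv_fm :: "('f, 'r) afm \<Rightarrow> nat set" where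
  "fv_fm One = {}"
| "fv_fm (Rel r ts) = (\<Union>t\<in>set ts. fv_trm t)"
| "fv_fm (Dst s t) = fv_trm s \<union> fv_trm t"
| "fv_fm (Scale c \<phi>) = fv_fm \<phi>"
| "fv_fm (Add \<phi> \<psi>) = fv_fm \<phi> \<union> fv_fm \<psi>"
| "fv_fm (Inf_q x \<phi>) = fv_fm \<phi> - {x}"
| "fv_fm (Sup_q x \<phi>) = fv_fm \<phi> - {x}"

text \<open>An interpretation consists of a carrier, a metric d, function interpretations F and
  relation interpretations R.  Substructures share d, F, R and only change the carrier.\<close>

fun eval_trm :: "('f \<Rightarrow> 'a list \<Rightarrow> 'a) \<Rightarrow> (nat \<Rightarrow> 'a) \<Rightarrow> 'f trm \<Rightarrow> 'a" where
  "eval_trm F \<sigma> (Var i) = \<sigma> i"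
| "eval_trm F \<sigma> (Fn f ts) = F f (map (eval_trm F \<sigma>) ts)"

fun eval_fm :: "'a set \<Rightarrow> ('a \<Rightarrow> 'a \<Rightarrow> real) \<Rightarrow> ('f \<Rightarrow> 'a list \<Rightarrow> 'a) \<Rightarrow> ('r \<Rightarrow> 'a list \<Rightarrow> real)
    \<Rightarrow> (nat \<Rightarrow> 'a) \<Rightarrow> ('f, 'r) afm \<Rightarrow> real" where
  "eval_fm M d F R \<sigma> One = 1"
| "eval_fm M d F R \<sigma> (Rel r ts) = R r (map (eval_trm F \<sigma>) ts)"
| "eval_fm M d F R \<sigma> (Dst s t) = d (eval_trm F \<sigma> s) (eval_trm F \<sigma> t)"
| "eval_fm M d F R \<sigma> (Scale c \<phi>) = c * eval_fm M d F R \<sigma> \<phi>"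
| "eval_fm M d F R \<sigma> (Add \<phi> \<psi>) = eval_fm M d F R \<sigma> \<phi> + eval_fm M d F R \<sigma> \<psi>"
| "eval_fm M d F R \<sigma> (Inf_q x \<phi>) = (INF a\<in>M. eval_fm M d F R (\<sigma>(x := a)) \<phi>)"
| "eval_fm M d F R \<sigma> (Sup_q x \<phi>) = (SUP a\<in>M. eval_fm M d F R (\<sigma>(x := a)) \<phi>)"

text \<open>n-tuples are lists of length n; M^n carries the max metric.\<close>

definition tuples :: "'a set \<Rightarrow> nat \<Rightarrow> 'a list set" where
  "tuples M n = {xs. length xs = n \<and> set xs \<subseteq> M}"

definition tdist :: "('a \<Rightarrow> 'a \<Rightarrow> real) \<Rightarrow> 'a list \<Rightarrow> 'a list \<Rightarrow> real" where
  "tdist d xs ys = Max (insert 0 {d (xs ! i) (ys ! i) | i. i < length xs})"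

definition is_structure ::
  "('f \<Rightarrow> nat) \<Rightarrow> ('r \<Rightarrow> nat) \<Rightarrow> 'a set \<Rightarrow> ('a \<Rightarrow> 'a \<Rightarrow> real)
    \<Rightarrow> ('f \<Rightarrow> 'a list \<Rightarrow> 'a) \<Rightarrow> ('r \<Rightarrow> 'a list \<Rightarrow> real) \<Rightarrow> bool" where
  "is_structure arf arr M d F R \<longleftrightarrow>
     M \<noteq> {} \<and> Metric_space M d \<and> Metric_space.mcomplete M d \<and>
     (\<forall>x\<in>M. \<forall>y\<in>M. d x y \<le> 1) \<and>
     (\<forall>f. \<forall>xs\<in>tuples M (arf f). F f xs \<in> M) \<and>
     (\<forall>f. \<exists>L. \<forall>xs\<in>tuples M (arf f). \<forall>ys\<in>tuples M (arf f).
            d (F f xs) (F f ys) \<le> L * tdist d xs ys) \<and>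
     (\<forall>r. \<forall>xs\<in>tuples M (arr r). 0 \<le> R r xs \<and> R r xs \<le> 1) \<and>
     (\<forall>r. \<exists>L. \<forall>xs\<in>tuples M (arr r). \<forall>ys\<in>tuples M (arr r).
            \<bar>R r xs - R r ys\<bar> \<le> L * tdist d xs ys)"

definition elem_substructure ::
  "('f \<Rightarrow> nat) \<Rightarrow> ('r \<Rightarrow> nat) \<Rightarrow> 'a set \<Rightarrow> 'a set \<Rightarrow> ('a \<Rightarrow> 'a \<Rightarrow> real)
    \<Rightarrow> ('f \<Rightarrow> 'a list \<Rightarrow> 'a) \<Rightarrow> ('r \<Rightarrow> 'a list \<Rightarrow> real) \<Rightarrow> bool" where
  "elem_substructure arf arr K M d F R \<longleftrightarrow>
     K \<subseteq> M \<and> is_structure arf arr K d F R \<and>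
     (\<forall>\<phi> \<sigma>. wf_fm arf arr \<phi> \<longrightarrow> range \<sigma> \<subseteq> K \<longrightarrow>
        eval_fm K d F R \<sigma> \<phi> = eval_fm M d F R \<sigma> \<phi>)"

text \<open>Assignment induced by a tuple (variables \<ge> n are irrelevant for formulas
  whose free variables are among 0..n-1).\<close>

definition tuple_asg :: "'a list \<Rightarrow> nat \<Rightarrow> 'a" where
  "tuple_asg xs i = (if i < length xs then xs ! i else undefined)"

definition definable_pred ::
  "('f \<Rightarrow> nat) \<Rightarrow> ('r \<Rightarrow> nat) \<Rightarrow> 'a set \<Rightarrow> ('a \<Rightarrow> 'a \<Rightarrow> real)
    \<Rightarrow> ('f \<Rightarrow> 'a list \<Rightarrow> 'a) \<Rightarrow> ('r \<Rightarrow> 'a list \<Rightarrow> real) \<Rightarrow> nat \<Rightarrow> ('a list \<Rightarrow> real) \<Rightarrow> bool" where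
  "definable_pred arf arr M d F R n P \<longleftrightarrow>
     (\<exists>\<phi> :: nat \<Rightarrow> ('f, 'r) afm.
        (\<forall>k. wf_fm arf arr (\<phi> k) \<and> fv_fm (\<phi> k) \<subseteq> {..<n}) \<and>
        (\<forall>\<epsilon>>0. \<exists>N. \<forall>k\<ge>N. \<forall>xs\<in>tuples M n.
            \<bar>eval_fm M d F R (tuple_asg xs) (\<phi> k) - P xs\<bar> \<le> \<epsilon>))"

definition tclosure :: "'a set \<Rightarrow> ('a \<Rightarrow> 'a \<Rightarrow> real) \<Rightarrow> nat \<Rightarrow> 'a list set \<Rightarrow> 'a list set" where
  "tclosure M d n S = {xs \<in> tuples M n. \<forall>\<epsilon>>0. \<exists>ys\<in>S. tdist d xs ys < \<epsilon>}"

definition setdist :: "('a \<Rightarrow> 'a \<Rightarrow> real) \<Rightarrow> 'a list set \<Rightarrow> 'a list \<Rightarrow> real" where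
  "setdist d D xs = (INF ys\<in>D. tdist d xs ys)"

definition definable_set ::
  "('f \<Rightarrow> nat) \<Rightarrow> ('r \<Rightarrow> nat) \<Rightarrow> 'a set \<Rightarrow> ('a \<Rightarrow> 'a \<Rightarrow> real)
    \<Rightarrow> ('f \<Rightarrow> 'a list \<Rightarrow> 'a) \<Rightarrow> ('r \<Rightarrow> 'a list \<Rightarrow> real) \<Rightarrow> nat \<Rightarrow> 'a list set \<Rightarrow> bool" where
  "definable_set arf arr M d F R n D \<longleftrightarrow>
     D \<subseteq> tuples M n \<and> tclosure M d n D = D \<and>
     definable_pred arf arr M d F R n (setdist d D)"

end

theory Submission
  imports Defs
begin


lemma net_K:
  assumes "Metric_space K d" "compact_space (Metric_space.mtopology K d)" "e>0"
  shows "\<exists>N. finite N \<and> N \<subseteq> K \<and> (\<forall>a\<in>K. \<exists>b\<in>N. d b a < e)"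
proof -
  have "Metric_space.mtotally_bounded K d K"
    using Metric_space.compact_space_eq_mcomplete_mtotally_bounded[OF assms(1)] assms(2) by blast
  then have "\<exists>N. finite N \<and> N \<subseteq> K \<and> K \<subseteq> (\<Union>x\<in>N. Metric_space.mball K d x e)"
    using assms(3) unfolding Metric_space.mtotally_bounded_def[OF assms(1)] by blast
  then obtain N where N: "finite N" "N \<subseteq> K" "K \<subseteq> (\<Union>x\<in>N. Metric_space.mball K d x e)"
    by blast
  have "\<forall>a\<in>K. \<exists>b\<in>N. d b a < e"
  proof
    fix a assume "a \<in> K"
    then obtain b where "b \<in> N" "a \<in> Metric_space.mball K d b e" using N(3) by blast
    then show "\<exists>b\<in>N. d b a < e" using Metric_space.in_mball[OF assms(1)] by blast
  qed
  then show ?thesis using N(1,2) by blast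
qed

lemma tdist_set_fin: "finite {d (xs ! i) (ys ! i) | i. i < length xs}"
proof -
  have "{d (xs ! i) (ys ! i) | i. i < length xs} = (\<lambda>i. d (xs ! i) (ys ! i)) ` {..<length xs}" by auto
  then show ?thesis by simp
qed

lemma tdist_nonneg: "0 \<le> tdist d xs ys"
  unfolding tdist_def using tdist_set_fin by (simp add: Max_ge_iff)

lemma tdist_ge: "i < length xs \<Longrightarrow> d (xs ! i) (ys ! i) \<le> tdist d xs ys"
  unfolding tdist_def using tdist_set_fin by (auto simp add: Max_ge_iff)

lemma tdist_le: "0 \<le> c \<Longrightarrow> (\<And>i. i < length xs \<Longrightarrow> d (xs ! i) (ys ! i) \<le> c) \<Longrightarrow> tdist d xs ys \<le> c"
  unfolding tdist_def using tdist_set_fin by (auto simp add: Max_le_iff)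

lemma tdist_lt: "0 < c \<Longrightarrow> (\<And>i. i < length xs \<Longrightarrow> d (xs ! i) (ys ! i) < c) \<Longrightarrow> tdist d xs ys < c"
  unfolding tdist_def using tdist_set_fin by (auto simp add: Max_less_iff)

lemma tuples_nth: "xs \<in> tuples M n \<Longrightarrow> i < n \<Longrightarrow> xs ! i \<in> M"
  unfolding tuples_def by auto

lemma tdist_triangle:
  assumes "Metric_space M d" "xs \<in> tuples M n" "ys \<in> tuples M n" "zs \<in> tuples M n"
  shows "tdist d xs zs \<le> tdist d xs ys + tdist d ys zs"
proof (rule tdist_le)
  show "0 \<le> tdist d xs ys + tdist d ys zs" using tdist_nonneg[of d xs ys] tdist_nonneg[of d ys zs] by linarith
  fix i assume i: "i < length xs"
  have ln: "length xs = n" "length ys = n" using assms unfolding tuples_def by auto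
  have "d (xs ! i) (zs ! i) \<le> d (xs ! i) (ys ! i) + d (ys ! i) (zs ! i)"
  proof -
    have "xs ! i \<in> M" "ys ! i \<in> M" "zs ! i \<in> M" using tuples_nth assms i ln by metis+
    then show ?thesis by (rule Metric_space.triangle[OF assms(1)])
  qed
  also have "\<dots> \<le> tdist d xs ys + tdist d ys zs"
    using tdist_ge[of i xs d ys] tdist_ge[of i ys d zs] i ln by simp
  finally show "d (xs ! i) (zs ! i) \<le> tdist d xs ys + tdist d ys zs" .
qed

lemma tdist_commute_le:
  assumes "Metric_space M d" "xs \<in> tuples M n" "ys \<in> tuples M n"
  shows "tdist d xs ys \<le> tdist d ys xs"
proof (rule tdist_le[OF tdist_nonneg])
  fix i assume i: "i < length xs"
  have ln: "length xs = n" "length ys = n" using assms unfolding tuples_def by auto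
  have "d (xs ! i) (ys ! i) = d (ys ! i) (xs ! i)"
    using Metric_space.commute[OF assms(1)] by blast
  also have "\<dots> \<le> tdist d ys xs" using tdist_ge[of i ys d xs] i ln by simp
  finally show "d (xs ! i) (ys ! i) \<le> tdist d ys xs" .
qed

lemma tdist_commute:
  assumes "Metric_space M d" "xs \<in> tuples M n" "ys \<in> tuples M n"
  shows "tdist d xs ys = tdist d ys xs"
  using tdist_commute_le[OF assms] tdist_commute_le[OF assms(1,3,2)] by simp

lemma tdist_self:
  assumes "Metric_space M d" "xs \<in> tuples M n"
  shows "tdist d xs xs = 0"
proof -
  have "tdist d xs xs \<le> 0"
  proof (rule tdist_le)
    fix i assume "i < length xs"
    then have "xs ! i \<in> M" using assms(2) unfolding tuples_def by auto
    then show "d (xs ! i) (xs ! i) \<le> 0" using Metric_space.mdist_zero[OF assms(1)] by simp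
  qed simp
  then show ?thesis using tdist_nonneg[of d xs xs] by simp
qed



lemma struct_F: "is_structure arf arr M d F R \<Longrightarrow> xs \<in> tuples M (arf f) \<Longrightarrow> F f xs \<in> M"
  unfolding is_structure_def by blast
lemma struct_R: "is_structure arf arr M d F R \<Longrightarrow> xs \<in> tuples M (arr r) \<Longrightarrow> 0 \<le> R r xs \<and> R r xs \<le> 1"
  unfolding is_structure_def by blast
lemma struct_ne: "is_structure arf arr M d F R \<Longrightarrow> M \<noteq> {}"
  unfolding is_structure_def by blast
lemma struct_ms: "is_structure arf arr M d F R \<Longrightarrow> Metric_space M d"
  unfolding is_structure_def by blast
lemma struct_d1: "is_structure arf arr M d F R \<Longrightarrow> x \<in> M \<Longrightarrow> y \<in> M \<Longrightarrow> d x y \<le> 1"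
  unfolding is_structure_def by blast

lemma eval_trm_in:
  assumes "is_structure arf arr M d F R" "range \<sigma> \<subseteq> M"
  shows "wf_trm arf t \<Longrightarrow> eval_trm F \<sigma> t \<in> M"
proof (induct t)
  case (Var x) then show ?case using assms by auto
next
  case (Fn f ts)
  then have "map (eval_trm F \<sigma>) ts \<in> tuples M (arf f)" unfolding tuples_def by auto
  then show ?case using struct_F[OF assms(1)] by simp
qed

fun bnd :: "('f, 'r) afm \<Rightarrow> real" where
  "bnd One = 1" | "bnd (Rel r ts) = 1" | "bnd (Dst s t) = 1"
| "bnd (Scale c \<phi>) = \<bar>c\<bar> * bnd \<phi>" | "bnd (Add \<phi> \<psi>) = bnd \<phi> + bnd \<psi>"
| "bnd (Inf_q x \<phi>) = bnd \<phi>" | "bnd (Sup_q x \<phi>) = bnd \<phi>"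

lemma eval_bnd:
  assumes "is_structure arf arr M d F R"
  shows "wf_fm arf arr \<phi> \<Longrightarrow> range \<sigma> \<subseteq> M \<Longrightarrow> \<bar>eval_fm M d F R \<sigma> \<phi>\<bar> \<le> bnd \<phi>"
proof (induct \<phi> arbitrary: \<sigma>)
  case One then show ?case by simp
next
  case (Rel r ts)
  then have "map (eval_trm F \<sigma>) ts \<in> tuples M (arr r)" 
    using eval_trm_in[OF assms] unfolding tuples_def by auto
  then show ?case using struct_R[OF assms] by simp
next
  case (Dst s t)
  then have "eval_trm F \<sigma> s \<in> M" "eval_trm F \<sigma> t \<in> M" using eval_trm_in[OF assms] by auto
  then have "0 \<le> d (eval_trm F \<sigma> s) (eval_trm F \<sigma> t)" "d (eval_trm F \<sigma> s) (eval_trm F \<sigma> t) \<le> 1"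
    using Metric_space.nonneg[OF struct_ms[OF assms]] struct_d1[OF assms] by auto
  then show ?case by simp
next
  case (Scale c \<phi>)
  then have "\<bar>eval_fm M d F R \<sigma> \<phi>\<bar> \<le> bnd \<phi>" by simp
  then have "\<bar>c\<bar> * \<bar>eval_fm M d F R \<sigma> \<phi>\<bar> \<le> \<bar>c\<bar> * bnd \<phi>" by (rule mult_left_mono) simp
  then show ?case by (simp add: abs_mult)
next
  case (Add \<phi> \<psi>)
  have "\<bar>eval_fm M d F R \<sigma> \<phi>\<bar> \<le> bnd \<phi>" "\<bar>eval_fm M d F R \<sigma> \<psi>\<bar> \<le> bnd \<psi>"
    using Add by auto
  moreover have "\<bar>eval_fm M d F R \<sigma> \<phi> + eval_fm M d F R \<sigma> \<psi>\<bar> \<le> \<bar>eval_fm M d F R \<sigma> \<phi>\<bar> + \<bar>eval_fm M d F R \<sigma> \<psi>\<bar>"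
    by (rule abs_triangle_ineq)
  ultimately show ?case by simp
next
  case (Inf_q x \<phi>)
  have ne: "M \<noteq> {}" using struct_ne[OF assms] .
  have b: "\<And>a. a \<in> M \<Longrightarrow> \<bar>eval_fm M d F R (\<sigma>(x := a)) \<phi>\<bar> \<le> bnd \<phi>"
    using Inf_q.prems by (intro Inf_q.hyps) auto
  have b': "\<And>a. a \<in> M \<Longrightarrow> - bnd \<phi> \<le> eval_fm M d F R (\<sigma>(x := a)) \<phi> \<and> eval_fm M d F R (\<sigma>(x := a)) \<phi> \<le> bnd \<phi>"
    using b by (metis abs_le_iff minus_le_iff)
  have bb: "bdd_below ((\<lambda>a. eval_fm M d F R (\<sigma>(x := a)) \<phi>) ` M)"
    using b' by (intro bdd_belowI2[where m="- bnd \<phi>"]) blast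
  have "(INF a\<in>M. eval_fm M d F R (\<sigma>(x := a)) \<phi>) \<ge> - bnd \<phi>"
    using b' ne by (intro cINF_greatest) blast+
  moreover obtain a where "a \<in> M" using ne by auto
  then have "(INF a\<in>M. eval_fm M d F R (\<sigma>(x := a)) \<phi>) \<le> bnd \<phi>"
    using b'[of a] cINF_lower[OF bb \<open>a\<in>M\<close>] by linarith
  ultimately show ?case by simp
next
  case (Sup_q x \<phi>)
  have ne: "M \<noteq> {}" using struct_ne[OF assms] .
  have b: "\<And>a. a \<in> M \<Longrightarrow> \<bar>eval_fm M d F R (\<sigma>(x := a)) \<phi>\<bar> \<le> bnd \<phi>"
    using Sup_q.prems by (intro Sup_q.hyps) auto
  have b': "\<And>a. a \<in> M \<Longrightarrow> - bnd \<phi> \<le> eval_fm M d F R (\<sigma>(x := a)) \<phi> \<and> eval_fm M d F R (\<sigma>(x := a)) \<phi> \<le> bnd \<phi>"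
    using b by (metis abs_le_iff minus_le_iff)
  have bb: "bdd_above ((\<lambda>a. eval_fm M d F R (\<sigma>(x := a)) \<phi>) ` M)"
    using b' by (intro bdd_aboveI2[where M="bnd \<phi>"]) blast
  have "(SUP a\<in>M. eval_fm M d F R (\<sigma>(x := a)) \<phi>) \<le> bnd \<phi>"
    using b' ne by (intro cSUP_least) blast+
  moreover obtain a where "a \<in> M" using ne by auto
  then have "(SUP a\<in>M. eval_fm M d F R (\<sigma>(x := a)) \<phi>) \<ge> - bnd \<phi>"
    using b'[of a] cSUP_upper[OF \<open>a\<in>M\<close> bb] by linarith
  ultimately show ?case by simp
qed

lemma eval_trm_cong: "(\<And>i. i \<in> fv_trm t \<Longrightarrow> \<sigma> i = \<tau> i) \<Longrightarrow> eval_trm F \<sigma> t = eval_trm F \<tau> t"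
proof (induct t)
  case (Fn f ts)
  have "map (eval_trm F \<sigma>) ts = map (eval_trm F \<tau>) ts"
  proof (rule map_cong[OF refl])
    fix x assume "x \<in> set ts"
    then show "eval_trm F \<sigma> x = eval_trm F \<tau> x" using Fn.prems by (intro Fn.hyps) auto
  qed
  then show ?case by (metis eval_trm.simps(2))
qed auto

lemma eval_fm_cong:
  "(\<And>i. i \<in> fv_fm \<phi> \<Longrightarrow> \<sigma> i = \<tau> i) \<Longrightarrow> eval_fm M d F R \<sigma> \<phi> = eval_fm M d F R \<tau> \<phi>"
proof (induct \<phi> arbitrary: \<sigma> \<tau>)
  case (Rel r ts)
  have "map (eval_trm F \<sigma>) ts = map (eval_trm F \<tau>) ts"
  proof (rule map_cong[OF refl])
    fix x assume "x \<in> set ts"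
    then show "eval_trm F \<sigma> x = eval_trm F \<tau> x" using Rel.prems by (intro eval_trm_cong) auto
  qed
  then show ?case by (metis eval_fm.simps(2))
next
  case (Dst s t)
  have "eval_trm F \<sigma> s = eval_trm F \<tau> s" "eval_trm F \<sigma> t = eval_trm F \<tau> t"
    using Dst.prems by (intro eval_trm_cong; simp)+
  then show ?case by simp
next
  case (Inf_q x \<phi>)
  have "\<And>a. eval_fm M d F R (\<sigma>(x := a)) \<phi> = eval_fm M d F R (\<tau>(x := a)) \<phi>"
    using Inf_q.prems by (intro Inf_q.hyps) auto
  then show ?case by simp
next
  case (Sup_q x \<phi>)
  have "\<And>a. eval_fm M d F R (\<sigma>(x := a)) \<phi> = eval_fm M d F R (\<tau>(x := a)) \<phi>"
    using Sup_q.prems by (intro Sup_q.hyps) auto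
  then show ?case by simp
next
  case (Scale c \<phi>)
  have "eval_fm M d F R \<sigma> \<phi> = eval_fm M d F R \<tau> \<phi>" using Scale.prems by (intro Scale.hyps) simp
  then show ?case by simp
next
  case (Add \<phi> \<psi>)
  have "eval_fm M d F R \<sigma> \<phi> = eval_fm M d F R \<tau> \<phi>" using Add.prems by (intro Add.hyps(1)) simp
  moreover have "eval_fm M d F R \<sigma> \<psi> = eval_fm M d F R \<tau> \<psi>" using Add.prems by (intro Add.hyps(2)) simp
  ultimately show ?case by simp
qed simp

fun supall :: "nat list \<Rightarrow> ('f, 'r) afm \<Rightarrow> ('f, 'r) afm" where
  "supall [] \<psi> = \<psi>" | "supall (v # vs) \<psi> = Sup_q v (supall vs \<psi>)"

lemma wf_supall: "wf_fm arf arr \<psi> \<Longrightarrow> wf_fm arf arr (supall vs \<psi>)"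
  by (induct vs) auto

lemma supall_lower:
  assumes "is_structure arf arr M d F R" "wf_fm arf arr \<psi>"
  shows "range \<sigma> \<subseteq> M \<Longrightarrow> range \<tau> \<subseteq> M \<Longrightarrow> (\<forall>i. i \<notin> set vs \<longrightarrow> \<tau> i = \<sigma> i) \<Longrightarrow>
    eval_fm M d F R \<tau> \<psi> \<le> eval_fm M d F R \<sigma> (supall vs \<psi>)"
proof (induct vs arbitrary: \<sigma>)
  case Nil
  then have "\<tau> = \<sigma>" by (simp add: fun_eq_iff)
  then show ?case by simp
next
  case (Cons v vs)
  have tv: "\<tau> v \<in> M" using Cons.prems(2) by blast
  have r: "range (\<sigma>(v := \<tau> v)) \<subseteq> M" using Cons.prems(1) tv by auto
  have "\<forall>i. i \<notin> set vs \<longrightarrow> \<tau> i = (\<sigma>(v := \<tau> v)) i" using Cons.prems(3) by simp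
  then have "eval_fm M d F R \<tau> \<psi> \<le> eval_fm M d F R (\<sigma>(v := \<tau> v)) (supall vs \<psi>)"
    by (rule Cons.hyps[OF r Cons.prems(2)])
  also have "\<dots> \<le> (SUP a\<in>M. eval_fm M d F R (\<sigma>(v := a)) (supall vs \<psi>))"
  proof (rule cSUP_upper[OF tv])
    show "bdd_above ((\<lambda>a. eval_fm M d F R (\<sigma>(v := a)) (supall vs \<psi>)) ` M)"
    proof -
      have "\<forall>a\<in>M. eval_fm M d F R (\<sigma>(v := a)) (supall vs \<psi>) \<le> bnd (supall vs \<psi>)"
      proof
        fix a assume "a \<in> M"
        then have "range (\<sigma>(v := a)) \<subseteq> M" using Cons.prems(1) by auto
        then show "eval_fm M d F R (\<sigma>(v := a)) (supall vs \<psi>) \<le> bnd (supall vs \<psi>)"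
          using eval_bnd[OF assms(1) wf_supall[OF assms(2)], of "\<sigma>(v := a)" vs] by (simp add: abs_le_iff)
      qed
      then show ?thesis by (meson bdd_aboveI2)
    qed
  qed
  finally show ?case by simp
qed

lemma supall_upper:
  assumes "K \<noteq> {}" "\<And>\<tau>. range \<tau> \<subseteq> K \<Longrightarrow> eval_fm K d F R \<tau> \<psi> \<le> c"
  shows "range \<sigma> \<subseteq> K \<Longrightarrow> eval_fm K d F R \<sigma> (supall vs \<psi>) \<le> c"
proof (induct vs arbitrary: \<sigma>)
  case Nil then show ?case using assms by simp
next
  case (Cons v vs)
  have "\<And>a. a \<in> K \<Longrightarrow> eval_fm K d F R (\<sigma>(v := a)) (supall vs \<psi>) \<le> c"
  proof -
    fix a assume "a \<in> K"
    then have "range (\<sigma>(v := a)) \<subseteq> K" using Cons.prems by auto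
    then show "eval_fm K d F R (\<sigma>(v := a)) (supall vs \<psi>) \<le> c" by (rule Cons.hyps)
  qed
  then have "(SUP a\<in>K. eval_fm K d F R (\<sigma>(v := a)) (supall vs \<psi>)) \<le> c" by (rule cSUP_least[OF assms(1)])
  then show ?case by simp
qed



lemma transfer:
  assumes M: "is_structure arf arr M d F R" and E: "elem_substructure arf arr K M d F R"
    and wf: "wf_fm arf arr \<psi>" and fv: "fv_fm \<psi> \<subseteq> {..<n}"
    and up: "\<And>y. y \<in> tuples K n \<Longrightarrow> eval_fm M d F R (tuple_asg y) \<psi> \<le> c"
    and x: "x \<in> tuples M n"
  shows "eval_fm M d F R (tuple_asg x) \<psi> \<le> c"
proof -
  have KM: "K \<subseteq> M" and SK: "is_structure arf arr K d F R"
    and el: "\<And>\<phi> \<sigma>. wf_fm arf arr \<phi> \<Longrightarrow> range \<sigma> \<subseteq> K \<Longrightarrow> eval_fm K d F R \<sigma> \<phi> = eval_fm M d F R \<sigma> \<phi>"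
    using E unfolding elem_substructure_def by auto
  have Kne: "K \<noteq> {}" using SK unfolding is_structure_def by auto
  then obtain k0 where k0: "k0 \<in> K" by auto
  define \<sigma>0 where "\<sigma>0 = (\<lambda>_::nat. k0)"
  define \<tau> where "\<tau> = (\<lambda>i. if i < n then x ! i else k0)"
  have lx: "length x = n" "set x \<subseteq> M" using x unfolding tuples_def by auto
  have r0: "range \<sigma>0 \<subseteq> K" using k0 by (auto simp: \<sigma>0_def)
  have rt: "range \<tau> \<subseteq> M" using lx k0 KM by (auto simp: \<tau>_def)
  have "eval_fm M d F R (tuple_asg x) \<psi> = eval_fm M d F R \<tau> \<psi>"
    using fv lx by (intro eval_fm_cong) (auto simp: tuple_asg_def \<tau>_def)
  also have "\<dots> \<le> eval_fm M d F R \<sigma>0 (supall [0..<n] \<psi>)"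
    using r0 KM rt by (intro supall_lower[OF M wf]) (auto simp: \<tau>_def \<sigma>0_def)
  also have "\<dots> = eval_fm K d F R \<sigma>0 (supall [0..<n] \<psi>)"
    using el[OF wf_supall[OF wf] r0] by simp
  also have "\<dots> \<le> c"
  proof -
    have up': "eval_fm K d F R \<tau>' \<psi> \<le> c" if r: "range \<tau>' \<subseteq> K" for \<tau>'
    proof -
      have "eval_fm K d F R \<tau>' \<psi> = eval_fm M d F R \<tau>' \<psi>" using el[OF wf r] .
      also have "\<dots> = eval_fm M d F R (tuple_asg (map \<tau>' [0..<n])) \<psi>"
        using fv by (intro eval_fm_cong) (auto simp: tuple_asg_def)
      also have "\<dots> \<le> c" using r by (intro up) (auto simp: tuples_def)
      finally show ?thesis .
    qed
    show ?thesis by (rule supall_upper[OF Kne up' r0])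
  qed
  finally show ?thesis .
qed

lemma approx_definable:
  assumes "\<And>e. e > 0 \<Longrightarrow> \<exists>\<psi>. wf_fm arf arr \<psi> \<and> fv_fm \<psi> \<subseteq> {..<n} \<and>
       (\<forall>xs\<in>tuples M n. \<bar>eval_fm M d F R (tuple_asg xs) \<psi> - P xs\<bar> \<le> e)"
  shows "definable_pred arf arr M d F R n P"
proof -
  have "\<forall>N::nat. \<exists>\<psi>. wf_fm arf arr \<psi> \<and> fv_fm \<psi> \<subseteq> {..<n} \<and>
       (\<forall>xs\<in>tuples M n. \<bar>eval_fm M d F R (tuple_asg xs) \<psi> - P xs\<bar> \<le> 1 / (real N + 1))"
    using assms by simp
  then obtain \<phi> where \<phi>: "\<And>N. wf_fm arf arr (\<phi> N) \<and> fv_fm (\<phi> N) \<subseteq> {..<n} \<and>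
       (\<forall>xs\<in>tuples M n. \<bar>eval_fm M d F R (tuple_asg xs) (\<phi> N) - P xs\<bar> \<le> 1 / (real N + 1))"
    by metis
  show ?thesis unfolding definable_pred_def
  proof (intro exI[of _ \<phi>] conjI)
    show "\<forall>k. wf_fm arf arr (\<phi> k) \<and> fv_fm (\<phi> k) \<subseteq> {..<n}" using \<phi> by auto
  next
    show "\<forall>e>0. \<exists>N. \<forall>k\<ge>N. \<forall>xs\<in>tuples M n. \<bar>eval_fm M d F R (tuple_asg xs) (\<phi> k) - P xs\<bar> \<le> e"
    proof (intro allI impI)
    fix e :: real assume e: "e > 0"
    obtain N :: nat where N: "1 / e < real N" using reals_Archimedean2 by blast
    show "\<exists>N. \<forall>k\<ge>N. \<forall>xs\<in>tuples M n. \<bar>eval_fm M d F R (tuple_asg xs) (\<phi> k) - P xs\<bar> \<le> e"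
    proof (intro exI[of _ N] allI impI ballI)
      fix k xs assume k: "N \<le> k" and xs: "xs \<in> tuples M n"
      have "1 / (real k + 1) \<le> e"
      proof -
        have "1 / e < real k + 1" using N k by linarith
        then show ?thesis using e by (simp add: field_simps)
      qed
      then show "\<bar>eval_fm M d F R (tuple_asg xs) (\<phi> k) - P xs\<bar> \<le> e" using \<phi>[of k] xs by fastforce
    qed
  qed
  qed
qed



lemma setdist_le: "y \<in> D \<Longrightarrow> setdist d D x \<le> tdist d x y"
  unfolding setdist_def by (rule cINF_lower) (auto intro: bdd_belowI2[where m=0] tdist_nonneg)

lemma setdist_ge: "D \<noteq> {} \<Longrightarrow> (\<And>y. y \<in> D \<Longrightarrow> c \<le> tdist d x y) \<Longrightarrow> c \<le> setdist d D x"
  unfolding setdist_def by (rule cINF_greatest) auto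

lemma setdist_nonneg: "D \<noteq> {} \<Longrightarrow> 0 \<le> setdist d D x"
  by (rule setdist_ge) (auto intro: tdist_nonneg)

lemma setdist_approx:
  assumes "D \<noteq> {}" "e > 0" shows "\<exists>y\<in>D. tdist d x y < setdist d D x + e"
proof (rule ccontr)
  assume "\<not> ?thesis"
  then have "setdist d D x + e \<le> setdist d D x" using assms(1) by (intro setdist_ge) auto
  then show False using assms(2) by simp
qed

lemma setdist_mono: "D \<subseteq> D' \<Longrightarrow> D \<noteq> {} \<Longrightarrow> setdist d D' x \<le> setdist d D x"
  by (rule setdist_ge) (auto intro: setdist_le)

lemma setdist_lip:
  assumes "Metric_space M d" "D \<noteq> {}" "D \<subseteq> tuples M n" "x \<in> tuples M n" "y \<in> tuples M n"
  shows "setdist d D x \<le> tdist d x y + setdist d D y"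
proof -
  have "setdist d D x - tdist d x y \<le> setdist d D y"
  proof (rule setdist_ge[OF assms(2)])
    fix z assume "z \<in> D"
    then have "setdist d D x \<le> tdist d x z" "tdist d x z \<le> tdist d x y + tdist d y z"
      using setdist_le tdist_triangle[OF assms(1) assms(4) assms(5)] assms(3) by auto
    then show "setdist d D x - tdist d x y \<le> tdist d y z" by simp
  qed
  then show ?thesis by simp
qed

lemma tclosure_iff: "x \<in> tclosure M d n S \<longleftrightarrow> x \<in> tuples M n \<and> (\<forall>e>0. \<exists>y\<in>S. tdist d x y < e)"
  by (simp add: tclosure_def)

lemma tclosure_tuples: "tclosure M d n S \<subseteq> tuples M n"
  unfolding tclosure_def by auto

lemma tclosure_sup:
  assumes "Metric_space M d" "S \<subseteq> tuples M n" shows "S \<subseteq> tclosure M d n S"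
proof
  fix x assume x: "x \<in> S"
  then have xt: "x \<in> tuples M n" using assms(2) by blast
  have "tdist d x x = 0" by (rule tdist_self[OF assms(1) xt])
  then have "\<forall>e>0. \<exists>ys\<in>S. tdist d x ys < e" by (intro allI impI bexI[OF _ x]) simp
  then show "x \<in> tclosure M d n S" unfolding tclosure_def using xt by blast
qed

lemma tclosure_idem:
  assumes "Metric_space M d" "S \<subseteq> tuples M n"
  shows "tclosure M d n (tclosure M d n S) = tclosure M d n S"
proof
  show "tclosure M d n S \<subseteq> tclosure M d n (tclosure M d n S)"
    using tclosure_sup[OF assms(1) tclosure_tuples] .
  show "tclosure M d n (tclosure M d n S) \<subseteq> tclosure M d n S"
  proof
    fix x assume x: "x \<in> tclosure M d n (tclosure M d n S)"
    have xt: "x \<in> tuples M n" and xc: "\<forall>e>0. \<exists>z\<in>tclosure M d n S. tdist d x z < e"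
      using tclosure_iff[of x M d n "tclosure M d n S"] x by blast+
    have "\<exists>y\<in>S. tdist d x y < e" if e: "e > 0" for e
    proof -
      have e2: "e/2 > 0" using e by simp
      obtain z where z: "z \<in> tclosure M d n S" "tdist d x z < e/2"
        using xc e2 by blast
      have "\<forall>e>0. \<exists>y\<in>S. tdist d z y < e" using tclosure_iff[of z M d n S] z(1) by blast
      then obtain y where y: "y \<in> S" "tdist d z y < e/2"
        using e2 by blast
      have "tdist d x y \<le> tdist d x z + tdist d z y"
        using tdist_triangle[OF assms(1) xt] z(1) y(1) assms(2) tclosure_tuples by blast
      then show ?thesis using y z by (intro bexI[OF _ y(1)]) simp
    qed
    then show "x \<in> tclosure M d n S" using tclosure_iff[of x M d n S] xt by blast
  qed
qed

lemma tclosure_empty: "tclosure M d n {} = {}"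
  unfolding tclosure_def by (auto intro: exI[of _ 1])



lemma dsD1: "definable_set arf arr M d F R n D \<Longrightarrow> D \<subseteq> tuples M n"
  unfolding definable_set_def by blast

lemma dsD3: "definable_set arf arr M d F R n D \<Longrightarrow> definable_pred arf arr M d F R n (setdist d D)"
  unfolding definable_set_def by blast

lemma dpD:
  assumes "definable_pred arf arr M d F R n P" "e > 0"
  shows "\<exists>\<psi>. wf_fm arf arr \<psi> \<and> fv_fm \<psi> \<subseteq> {..<n} \<and>
           (\<forall>xs\<in>tuples M n. \<bar>eval_fm M d F R (tuple_asg xs) \<psi> - P xs\<bar> \<le> e)"
proof -
  obtain \<phi> :: "nat \<Rightarrow> ('a, 'b) afm" where
    h1: "\<forall>k. wf_fm arf arr (\<phi> k) \<and> fv_fm (\<phi> k) \<subseteq> {..<n}" and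
    h2: "\<forall>\<epsilon>>0. \<exists>N. \<forall>k\<ge>N. \<forall>xs\<in>tuples M n. \<bar>eval_fm M d F R (tuple_asg xs) (\<phi> k) - P xs\<bar> \<le> \<epsilon>"
    using assms(1) unfolding definable_pred_def by blast
  obtain N where "\<forall>k\<ge>N. \<forall>xs\<in>tuples M n. \<bar>eval_fm M d F R (tuple_asg xs) (\<phi> k) - P xs\<bar> \<le> e"
    using h2 assms(2) by blast
  then have "\<forall>xs\<in>tuples M n. \<bar>eval_fm M d F R (tuple_asg xs) (\<phi> N) - P xs\<bar> \<le> e" by blast
  then show ?thesis using h1 by blast
qed

lemma finite_eventually:
  assumes "finite N" "\<forall>z\<in>N. \<exists>k::nat. \<forall>m\<ge>k. Q z m"
  shows "\<exists>k. \<forall>z\<in>N. \<forall>m\<ge>k. Q z m"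
proof -
  obtain f where f: "\<forall>z\<in>N. \<forall>m\<ge>f z. Q z m" using assms(2) by metis
  have "\<forall>z\<in>N. \<forall>m\<ge>Max (insert 0 (f ` N)). Q z m"
  proof (intro ballI allI impI)
    fix z m assume z: "z \<in> N" and m: "Max (insert 0 (f ` N)) \<le> m"
    have "f z \<le> Max (insert 0 (f ` N))" using z assms(1) by simp
    then show "Q z m" using f z m by auto
  qed
  then show ?thesis by blast
qed

lemma net_tuples:
  assumes msK: "Metric_space K d" and cK: "compact_space (Metric_space.mtopology K d)" and e: "e > 0"
  shows "\<exists>N. finite N \<and> N \<subseteq> tuples K n \<and>
           (\<forall>y\<in>tuples K n. \<exists>z\<in>N. tdist d y z < e \<and> tdist d z y < e)"
proof -
  obtain NK where NK: "finite NK" "NK \<subseteq> K" "\<forall>a\<in>K. \<exists>b\<in>NK. d b a < e"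
    using net_K[OF msK cK e] by blast
  define pick where "pick a = (SOME b. b \<in> NK \<and> d b a < e)" for a
  have pick: "pick a \<in> NK \<and> d (pick a) a < e" if "a \<in> K" for a
    unfolding pick_def by (rule someI_ex) (use NK(3) that in blast)
  have fin: "finite (tuples NK n)"
  proof -
    have "tuples NK n = {xs. set xs \<subseteq> NK \<and> length xs = n}" unfolding tuples_def by auto
    then show ?thesis using finite_lists_length_eq[OF NK(1)] by simp
  qed
  have sub: "tuples NK n \<subseteq> tuples K n" using NK(2) unfolding tuples_def by auto
  have "\<forall>y\<in>tuples K n. \<exists>z\<in>tuples NK n. tdist d y z < e \<and> tdist d z y < e"
  proof
    fix y assume y: "y \<in> tuples K n"
    have ly: "length y = n" and sy: "set y \<subseteq> K" using y unfolding tuples_def by auto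
    let ?z = "map pick y"
    have zin: "?z \<in> tuples NK n" using ly sy pick unfolding tuples_def by auto
    have c1: "d (y ! i) (?z ! i) < e" if "i < length y" for i
    proof -
      have yi: "y ! i \<in> K" using sy that by auto
      then have "pick (y ! i) \<in> K" using pick NK(2) by blast
      then have "d (y ! i) (pick (y ! i)) = d (pick (y ! i)) (y ! i)"
        using Metric_space.commute[OF msK] yi by blast
      then show ?thesis using pick[OF yi] that by simp
    qed
    have c2: "d (?z ! i) (y ! i) < e" if "i < length ?z" for i
    proof -
      have yi: "y ! i \<in> K" using sy that by auto
      then show ?thesis using pick[OF yi] that by simp
    qed
    have "tdist d y ?z < e" using c1 by (intro tdist_lt[OF e]) blast
    moreover have "tdist d ?z y < e" using c2 by (intro tdist_lt[OF e]) blast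
    ultimately show "\<exists>z\<in>tuples NK n. tdist d y z < e \<and> tdist d z y < e" using zin by blast
  qed
  then show ?thesis using fin sub by blast
qed



lemma main_ne:
  assumes M: "is_structure arf arr M d F R"
    and El: "elem_substructure arf arr K M d F R"
    and cK: "compact_space (Metric_space.mtopology K d)"
    and df: "\<And>k. definable_set arf arr M d F R n (Ds k)"
    and mono: "\<And>k. Ds k \<subseteq> Ds (Suc k)"
    and ne: "\<And>k. Ds k \<noteq> {}"
  shows "definable_set arf arr M d F R n (tclosure M d n (\<Union>k. Ds k))"
proof -
  have ms: "Metric_space M d" by (rule struct_ms[OF M])
  have KM: "K \<subseteq> M" and SK: "is_structure arf arr K d F R"
    using El unfolding elem_substructure_def by blast+
  have msK: "Metric_space K d" by (rule struct_ms[OF SK])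
  have KtM: "tuples K n \<subseteq> tuples M n" using KM unfolding tuples_def by auto
  have Dt: "Ds k \<subseteq> tuples M n" for k using dsD1[OF df] .
  have dp: "definable_pred arf arr M d F R n (setdist d (Ds k))" for k using dsD3[OF df] .
  define U where "U = (\<Union>k. Ds k)"
  define Dc where "Dc = tclosure M d n U"
  have Ut: "U \<subseteq> tuples M n" unfolding U_def using Dt by blast
  have monoD: "k \<le> m \<Longrightarrow> Ds k \<subseteq> Ds m" for k m
    by (rule lift_Suc_mono_le[of Ds, OF mono])
  have DsDc: "Ds k \<subseteq> Dc" for k
  proof -
    have "Ds k \<subseteq> U" unfolding U_def by blast
    also have "U \<subseteq> Dc" unfolding Dc_def by (rule tclosure_sup[OF ms Ut])
    finally show ?thesis .
  qed
  have Dcne: "Dc \<noteq> {}" using DsDc[of 0] ne[of 0] by blast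
  have Dct: "Dc \<subseteq> tuples M n" unfolding Dc_def by (rule tclosure_tuples)
  define P where "P k = setdist d (Ds k)" for k
  define G where "G = setdist d Dc"
  have i1: "G x \<le> P k x" for k x unfolding G_def P_def by (rule setdist_mono[OF DsDc ne])
  have i2: "k \<le> m \<Longrightarrow> P m x \<le> P k x" for k m x
    unfolding P_def by (rule setdist_mono[OF monoD ne])
  have i3: "\<exists>k. P k x \<le> G x + e" if x: "x \<in> tuples M n" and e: "e > 0" for x e
  proof -
    have e2: "e/2 > 0" using e by simp
    obtain z where z: "z \<in> Dc" "tdist d x z < G x + e/2"
      using setdist_approx[OF Dcne e2] unfolding G_def by blast
    have "\<forall>e>0. \<exists>y\<in>U. tdist d z y < e" using z(1) tclosure_iff[of z M d n U] unfolding Dc_def by blast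
    then obtain y where y: "y \<in> U" "tdist d z y < e/2" using e2 by blast
    then obtain k where yk: "y \<in> Ds k" unfolding U_def by blast
    have zt: "z \<in> tuples M n" using z(1) Dct by blast
    have yt: "y \<in> tuples M n" using y(1) Ut by blast
    have "P k x \<le> tdist d x y" unfolding P_def by (rule setdist_le[OF yk])
    also have "\<dots> \<le> tdist d x z + tdist d z y" by (rule tdist_triangle[OF ms x zt yt])
    finally have "P k x \<le> G x + e" using z(2) y(2) by simp
    then show ?thesis by blast
  qed
  have lip: "P k x \<le> tdist d x y + P k y" if "x \<in> tuples M n" "y \<in> tuples M n" for k x y
    unfolding P_def by (rule setdist_lip[OF ms ne Dt that])
  have dini: "\<exists>k0. \<forall>k\<ge>k0. \<forall>m\<ge>k. \<forall>y\<in>tuples K n. P k y - P m y \<le> e" if e: "e > 0" for e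
  proof -
    have e3: "e/3 > 0" using e by simp
    obtain N where N: "finite N" "N \<subseteq> tuples K n"
      "\<forall>y\<in>tuples K n. \<exists>z\<in>N. tdist d y z < e/3 \<and> tdist d z y < e/3"
      using net_tuples[OF msK cK e3, of n] by (elim exE conjE) (rule that)
    have "\<forall>z\<in>N. \<exists>k. \<forall>m\<ge>k. P m z \<le> G z + e/3"
    proof
      fix z assume "z \<in> N"
      then have "z \<in> tuples M n" using N(2) KtM by blast
      then obtain k where k: "P k z \<le> G z + e/3" using i3 e3 by blast
      have "\<forall>m\<ge>k. P m z \<le> G z + e/3"
      proof (intro allI impI)
        fix m assume "k \<le> m"
        then have "P m z \<le> P k z" by (rule i2)
        then show "P m z \<le> G z + e/3" using k by simp
      qed
      then show "\<exists>k. \<forall>m\<ge>k. P m z \<le> G z + e/3" by blast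
    qed
    then have "\<exists>k0. \<forall>z\<in>N. \<forall>m\<ge>k0. P m z \<le> G z + e/3"
      by (rule finite_eventually[OF N(1)])
    then obtain k0 where k0: "\<forall>z\<in>N. \<forall>m\<ge>k0. P m z \<le> G z + e/3" by (elim exE)
    have "\<forall>k\<ge>k0. \<forall>m\<ge>k. \<forall>y\<in>tuples K n. P k y - P m y \<le> e"
    proof (intro allI impI ballI)
      fix k m y assume k: "k0 \<le> k" and m: "k \<le> m" and y: "y \<in> tuples K n"
      obtain z where z: "z \<in> N" "tdist d y z < e/3" "tdist d z y < e/3" using N(3) y by blast
      have yM: "y \<in> tuples M n" using y KtM by blast
      have zM: "z \<in> tuples M n" using z(1) N(2) KtM by blast
      have a1: "P k y \<le> tdist d y z + P k z" by (rule lip[OF yM zM])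
      have a2: "P m z \<le> tdist d z y + P m y" by (rule lip[OF zM yM])
      have a3: "P k z \<le> G z + e/3" using k0 z(1) k by blast
      have a4: "G z \<le> P m z" by (rule i1)
      show "P k y - P m y \<le> e" using a1 a2 a3 a4 z(2) z(3) by linarith
    qed
    then show ?thesis by blast
  qed
  have cauchy: "\<exists>k0. \<forall>k\<ge>k0. \<forall>m\<ge>k. \<forall>x\<in>tuples M n. P k x - P m x \<le> e" if e: "e > 0" for e
  proof -
    have e5: "e/5 > 0" using e by simp
    obtain k0 where k0: "\<forall>k\<ge>k0. \<forall>m\<ge>k. \<forall>y\<in>tuples K n. P k y - P m y \<le> e/5"
      using dini[OF e5] by blast
    have "\<forall>k\<ge>k0. \<forall>m\<ge>k. \<forall>x\<in>tuples M n. P k x - P m x \<le> e"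
    proof (intro allI impI ballI)
      fix k m x assume k: "k0 \<le> k" and m: "k \<le> m" and x: "x \<in> tuples M n"
      obtain a where a: "wf_fm arf arr a" "fv_fm a \<subseteq> {..<n}"
        "\<forall>xs\<in>tuples M n. \<bar>eval_fm M d F R (tuple_asg xs) a - P k xs\<bar> \<le> e/5"
        using dpD[OF dp e5] unfolding P_def by blast
      obtain b where b: "wf_fm arf arr b" "fv_fm b \<subseteq> {..<n}"
        "\<forall>xs\<in>tuples M n. \<bar>eval_fm M d F R (tuple_asg xs) b - P m xs\<bar> \<le> e/5"
        using dpD[OF dp e5] unfolding P_def by blast
      define ch where "ch = Add a (Scale (-1) b)"
      have ev: "eval_fm M d F R \<sigma> ch = eval_fm M d F R \<sigma> a - eval_fm M d F R \<sigma> b" for \<sigma>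
        unfolding ch_def by simp
      have wfc: "wf_fm arf arr ch" unfolding ch_def using a(1) b(1) by simp
      have fvc: "fv_fm ch \<subseteq> {..<n}" unfolding ch_def using a(2) b(2) by simp
      have up: "eval_fm M d F R (tuple_asg y) ch \<le> 3*e/5" if y: "y \<in> tuples K n" for y
      proof -
        have yM: "y \<in> tuples M n" using y KtM by blast
        have "P k y - P m y \<le> e/5" using k0 k m y by blast
        moreover have "\<bar>eval_fm M d F R (tuple_asg y) a - P k y\<bar> \<le> e/5" using a(3) yM by blast
        moreover have "\<bar>eval_fm M d F R (tuple_asg y) b - P m y\<bar> \<le> e/5" using b(3) yM by blast
        ultimately show ?thesis unfolding ev by linarith
      qed
      have "eval_fm M d F R (tuple_asg x) ch \<le> 3*e/5"
        by (rule transfer[OF M El wfc fvc up x])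
      moreover have "\<bar>eval_fm M d F R (tuple_asg x) a - P k x\<bar> \<le> e/5" using a(3) x by blast
      moreover have "\<bar>eval_fm M d F R (tuple_asg x) b - P m x\<bar> \<le> e/5" using b(3) x by blast
      ultimately show "P k x - P m x \<le> e" unfolding ev by linarith
    qed
    then show ?thesis by blast
  qed
  have unif: "\<exists>k0. \<forall>k\<ge>k0. \<forall>x\<in>tuples M n. \<bar>P k x - G x\<bar> \<le> e" if e: "e > 0" for e
  proof -
    obtain k0 where k0: "\<forall>k\<ge>k0. \<forall>m\<ge>k. \<forall>x\<in>tuples M n. P k x - P m x \<le> e"
      using cauchy[OF e] by blast
    have "\<forall>k\<ge>k0. \<forall>x\<in>tuples M n. \<bar>P k x - G x\<bar> \<le> e"
    proof (intro allI impI ballI)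
      fix k x assume k: "k0 \<le> k" and x: "x \<in> tuples M n"
      have "P k x - G x \<le> e"
      proof (rule ccontr)
        assume c: "\<not> P k x - G x \<le> e"
        define \<delta> where "\<delta> = (P k x - G x - e) / 2"
        have \<delta>: "\<delta> > 0" using c unfolding \<delta>_def by simp
        obtain m where m: "P m x \<le> G x + \<delta>" using i3[OF x \<delta>] by blast
        have "P (max m k) x \<le> P m x" by (rule i2) simp
        moreover have "P k x - P (max m k) x \<le> e" using k0 k x by simp
        moreover have "2 * \<delta> = P k x - G x - e" unfolding \<delta>_def by simp
        ultimately show False using m \<delta> by linarith
      qed
      moreover have "G x \<le> P k x" by (rule i1)
      ultimately show "\<bar>P k x - G x\<bar> \<le> e" by simp
    qed
    then show ?thesis by blast
  qed
  have defG: "definable_pred arf arr M d F R n G"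
  proof (rule approx_definable)
    fix e :: real assume e: "e > 0"
    have e2: "e/2 > 0" using e by simp
    obtain k0 where k0: "\<forall>k\<ge>k0. \<forall>x\<in>tuples M n. \<bar>P k x - G x\<bar> \<le> e/2"
      using unif[OF e2] by blast
    obtain a where a: "wf_fm arf arr a" "fv_fm a \<subseteq> {..<n}"
      "\<forall>xs\<in>tuples M n. \<bar>eval_fm M d F R (tuple_asg xs) a - P k0 xs\<bar> \<le> e/2"
      using dpD[OF dp e2] unfolding P_def by blast
    have "\<forall>xs\<in>tuples M n. \<bar>eval_fm M d F R (tuple_asg xs) a - G xs\<bar> \<le> e"
    proof
      fix xs assume xs: "xs \<in> tuples M n"
      have "\<bar>P k0 xs - G xs\<bar> \<le> e/2" using k0 xs by blast
      moreover have "\<bar>eval_fm M d F R (tuple_asg xs) a - P k0 xs\<bar> \<le> e/2" using a(3) xs by blast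
      ultimately show "\<bar>eval_fm M d F R (tuple_asg xs) a - G xs\<bar> \<le> e" by linarith
    qed
    then show "\<exists>\<psi>. wf_fm arf arr \<psi> \<and> fv_fm \<psi> \<subseteq> {..<n} \<and>
       (\<forall>xs\<in>tuples M n. \<bar>eval_fm M d F R (tuple_asg xs) \<psi> - G xs\<bar> \<le> e)" using a(1,2) by blast
  qed
  have "tclosure M d n Dc = Dc" unfolding Dc_def by (rule tclosure_idem[OF ms Ut])
  then have "definable_set arf arr M d F R n Dc"
    unfolding definable_set_def using Dct defG unfolding G_def by blast
  then show ?thesis unfolding Dc_def U_def .
qed



theorem mainTheorem20:
  fixes arf :: "'f \<Rightarrow> nat" and arr :: "'r \<Rightarrow> nat"
    and M K :: "'a set" and d :: "'a \<Rightarrow> 'a \<Rightarrow> real"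
    and F :: "'f \<Rightarrow> 'a list \<Rightarrow> 'a" and R :: "'r \<Rightarrow> 'a list \<Rightarrow> real"
    and n :: nat and Ds :: "nat \<Rightarrow> 'a list set"
  assumes "is_structure arf arr M d F R"
    and "elem_substructure arf arr K M d F R"
    and "compact_space (Metric_space.mtopology K d)"
    and "\<And>k. definable_set arf arr M d F R n (Ds k)"
    and "\<And>k. Ds k \<subseteq> Ds (Suc k)"
  shows "definable_set arf arr M d F R n (tclosure M d n (\<Union>k. Ds k))"
proof (cases "\<forall>k. Ds k = {}")
  case True
  then have "(\<Union>k. Ds k) = {}" by simp
  then have "tclosure M d n (\<Union>k. Ds k) = Ds 0" using True tclosure_empty by simp
  then show ?thesis using assms(4)[of 0] by simp
next
  case False
  then obtain k1 where k1: "Ds k1 \<noteq> {}" by blast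
  have monoD: "k \<le> m \<Longrightarrow> Ds k \<subseteq> Ds m" for k m
    by (rule lift_Suc_mono_le[of Ds, OF assms(5)])
  define E where "E k = Ds (k + k1)" for k
  have Ene: "E k \<noteq> {}" for k using k1 monoD[of k1 "k + k1"] unfolding E_def by auto
  have Emono: "E k \<subseteq> E (Suc k)" for k unfolding E_def using assms(5) by simp
  have Edef: "definable_set arf arr M d F R n (E k)" for k unfolding E_def by (rule assms(4))
  have U: "(\<Union>k. E k) = (\<Union>k. Ds k)"
  proof
    show "(\<Union>k. E k) \<subseteq> (\<Union>k. Ds k)" unfolding E_def by blast
    show "(\<Union>k. Ds k) \<subseteq> (\<Union>k. E k)"
    proof
      fix x assume "x \<in> (\<Union>k. Ds k)"
      then obtain k where "x \<in> Ds k" by blast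
      then have "x \<in> E k" unfolding E_def using monoD[of k "k + k1"] by auto
      then show "x \<in> (\<Union>k. E k)" by blast
    qed
  qed
  have "definable_set arf arr M d F R n (tclosure M d n (\<Union>k. E k))"
    by (rule main_ne[where Ds=E, OF assms(1,2,3) Edef Emono Ene])
  then show ?thesis unfolding U .
qed


end
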